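(* Let $n\ge 3$. The resolving polynomial of the power graph $P(G(n))$ of the gyrogroup $G(n)$ (defined in the context) is $$\psi(P(G(n)),x)=x^{2^n}+2^n x^{2^n-1}+(2^{2n-2}+2^{n-1}-1)x^{2^n-2}+(2^{2n-2}-2^{n-1})x^{2^n-3}.$$
   Context: Let $n\ge 3$ be an integer and $m=2^{n-1}$. Let $P(n)=\{0,1,\dots,m-1\}$, $H(n)=\{m,m+1,\dots,2^n-1\}$ and $G(n)=P(n)\cup H(n)$. For $i,j\in G(n)$ let $t,s,k\in P(n)$ be the residues modulo $m$ (taken in $\{0,\dots,m-1\}$) of $i+j$, $i+(\frac m2-1)j$ and $(\frac m2+1)i+(\frac m2-1)j$, respectively, and define $i\oplus j=t$ if $i,j\in P(n)$; $i\oplus j=t+m$ if $i\in P(n),j\in H(n)$; $i\oplus j=s+m$ if $i\in H(n),j\in P(n)$; $i\oplus j=k$ if $i,j\in H(n)$. Then $(G(n),\oplus)$ is a gyrogroup with identity $e=0$. Powers are defined by $a^1=a$, $a^{k+1}=a^k\oplus a$. The power graph $P(G(n))$ is the simple undirected graph with vertex set $G(n)$ in which distinct vertices $u,v$ are adjacent if and only if $u^k=v$ or $v^k=u$ for some positive integer $k$. For a connected graph $G$ and an ordered set $U=\{u_1,\dots,u_s\}\subseteq V(G)$, the representation of $v$ is $r(v|U)=(d(v,u_1),\dots,d(v,u_s))$; $U$ is a resolving set if distinct vertices have distinct representations, and the metric dimension $\psi(G)$ is the minimum size of a resolving set. If $|V(G)|=N$ and $r_k$ denotes the number of resolving sets of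 $G$ of cardinality $k$, the resolving polynomial is $\psi(G,x)=\sum_{k=\psi(G)}^{N} r_k x^k$. *)

theory Defs
  imports "HOL-Computational_Algebra.Polynomial"
begin

definition gm :: "nat \<Rightarrow> nat" where
  "gm n = 2 ^ (n - 1)"

definition gcarrier :: "nat \<Rightarrow> nat set" where
  "gcarrier n = {0..<2 ^ n}"

text \<open>P(n) = {0..<m}, H(n) = {m..<2^n}. The operation follows the paper's case split.\<close>
definition gop :: "nat \<Rightarrow> nat \<Rightarrow> nat \<Rightarrow> nat" where
  "gop n i j =
     (let m = gm n;
          t = (i + j) mod m;
          s = (i + (m div 2 - 1) * j) mod m;
          k = ((m div 2 + 1) * i + (m div 2 - 1) * j) mod m
      in if i < m \<and> j < m then t
         else if i < m \<and> m \<le> j then t + m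
         else if m \<le> i \<and> j < m then s + m
         else k)"

text \<open>Powers: a^1 = a, a^(k+1) = a^k \<oplus> a (only positive exponents are used).\<close>
fun gpow :: "nat \<Rightarrow> nat \<Rightarrow> nat \<Rightarrow> nat" where
  "gpow n a 0 = 0"
| "gpow n a (Suc 0) = a"
| "gpow n a (Suc (Suc k)) = gop n (gpow n a (Suc k)) a"

definition power_adj :: "nat \<Rightarrow> nat \<Rightarrow> nat \<Rightarrow> bool" where
  "power_adj n u v \<longleftrightarrow> u \<in> gcarrier n \<and> v \<in> gcarrier n \<and> u \<noteq> v \<and>
     (\<exists>k::nat. k \<ge> 1 \<and> (gpow n u k = v \<or> gpow n v k = u))"

fun walk_le :: "'a set \<Rightarrow> ('a \<Rightarrow> 'a \<Rightarrow> bool) \<Rightarrow> nat \<Rightarrow> 'a \<Rightarrow> 'a \<Rightarrow> bool" where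
  "walk_le V E 0 u v \<longleftrightarrow> u = v"
| "walk_le V E (Suc d) u v \<longleftrightarrow> u = v \<or> (\<exists>w\<in>V. E u w \<and> walk_le V E d w v)"

definition gdist :: "'a set \<Rightarrow> ('a \<Rightarrow> 'a \<Rightarrow> bool) \<Rightarrow> 'a \<Rightarrow> 'a \<Rightarrow> nat" where
  "gdist V E u v = (LEAST d. walk_le V E d u v)"

definition resolving :: "'a set \<Rightarrow> ('a \<Rightarrow> 'a \<Rightarrow> bool) \<Rightarrow> 'a set \<Rightarrow> bool" where
  "resolving V E U \<longleftrightarrow> U \<subseteq> V \<and>
     (\<forall>u\<in>V. \<forall>v\<in>V. u \<noteq> v \<longrightarrow> (\<exists>w\<in>U. gdist V E u w \<noteq> gdist V E v w))"

definition num_resolving :: "'a set \<Rightarrow> ('a \<Rightarrow> 'a \<Rightarrow> bool) \<Rightarrow> nat \<Rightarrow> nat" where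
  "num_resolving V E k = card {U. resolving V E U \<and> card U = k}"

definition metric_dim :: "'a set \<Rightarrow> ('a \<Rightarrow> 'a \<Rightarrow> bool) \<Rightarrow> nat" where
  "metric_dim V E = (LEAST k. \<exists>U. resolving V E U \<and> card U = k)"

definition resolving_poly :: "'a set \<Rightarrow> ('a \<Rightarrow> 'a \<Rightarrow> bool) \<Rightarrow> int poly" where
  "resolving_poly V E =
     (\<Sum>k\<in>{metric_dim V E..card V}. monom (int (num_resolving V E k)) k)"

end

theory Submission
  imports Defs "HOL-Computational_Algebra.Primes"
begin


lemma gm_facts:
  assumes "n \<ge> 3"
  shows "gm n \<ge> 4" "2 ^ n = 2 * gm n" "gm n div 2 \<ge> 1" "2 * (gm n div 2) = gm n"
proof -
  obtain k where k: "n = Suc (Suc (Suc k))" using assms by (metis Suc3_eq_add_3 add.commute le_Suc_ex)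
  show "gm n \<ge> 4" "2 ^ n = 2 * gm n" "gm n div 2 \<ge> 1" "2 * (gm n div 2) = gm n"
    by (simp_all add: k gm_def)
qed

lemma gpowP:
  assumes "a < gm n"
  shows "gpow n a (Suc k) = (Suc k * a) mod gm n"
proof (induction k)
  case 0
  then show ?case using assms by simp
next
  case (Suc k)
  have "gpow n a (Suc (Suc k)) = gop n (gpow n a (Suc k)) a" by simp
  also have "\<dots> = ((Suc k * a) mod gm n + a) mod gm n"
    using Suc assms by (simp add: gop_def Let_def)
  also have "\<dots> = (Suc (Suc k) * a) mod gm n"
    by (simp add: mod_add_right_eq algebra_simps)
  finally show ?case .
qed

lemma gpowH:
  assumes "n \<ge> 3" "gm n \<le> a" "a < 2 * gm n"
  shows "gpow n a (Suc k) = (if even k then a else 0)"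
proof (induction k)
  case 0
  then show ?case by simp
next
  case (Suc k)
  note f = gm_facts[OF assms(1)]
  obtain h where h: "gm n div 2 = Suc h" using f(3) by (metis Suc_le_D One_nat_def Suc_le_eq gr0_conv_Suc)
  have "gpow n a (Suc (Suc k)) = gop n (gpow n a (Suc k)) a" by simp
  show ?case
  proof (cases "even k")
    case True
    have "(gm n div 2 + 1) * a + (gm n div 2 - 1) * a = gm n * a"
    proof -
      have "(gm n div 2 + 1) * a + (gm n div 2 - 1) * a = (2 * (gm n div 2)) * a"
        using h by (simp add: algebra_simps)
      then show ?thesis using f(4) by simp
    qed
    then show ?thesis using True Suc assms by (simp add: gop_def Let_def)
  next
    case False
    have "a mod gm n = a - gm n" using assms by (simp add: le_mod_geq)
    then show ?thesis using False Suc assms f by (simp add: gop_def Let_def)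
  qed
qed

lemma cyc_solve:
  fixes u v m :: nat
  assumes "u \<noteq> 0" "gcd u m dvd v" "v < m"
  shows "\<exists>k. (Suc k * u) mod m = v"
proof -
  obtain x y where xy: "u * x = m * y + gcd u m" using bezout_nat[OF assms(1)] by blast
  obtain c where c: "v = gcd u m * c" using assms(2) by blast
  have "((x * c + m) * u) mod m = ((m * y + gcd u m) * c + m * u) mod m"
    by (metis xy add_mult_distrib mult.commute mult.assoc)
  also have "\<dots> = (gcd u m * c + m * (y * c + u)) mod m" by (simp add: algebra_simps)
  also have "\<dots> = v mod m" using c by simp
  finally have "((x * c + m) * u) mod m = v" using assms(3) by simp
  moreover have "x * c + m > 0" using assms(3) by simp
  ultimately show ?thesis by (metis gr0_conv_Suc)
qed

lemma pow2_le_dvd: "(i::nat) \<le> j \<Longrightarrow> (2::nat) ^ i dvd 2 ^ j"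
  by (simp add: le_imp_power_dvd)

lemma cyc_adj:
  fixes u v :: nat
  assumes "u < gm n" "v < gm n" "u \<noteq> v"
  shows "\<exists>k. (Suc k * u) mod gm n = v \<or> (Suc k * v) mod gm n = u"
proof -
  have gu: "\<exists>i\<le>n-1. gcd u (gm n) = 2 ^ i"
    using divides_primepow_nat[of 2 "gcd u (gm n)" "n-1"] by (simp add: gm_def)
  have gv: "\<exists>i\<le>n-1. gcd v (gm n) = 2 ^ i"
    using divides_primepow_nat[of 2 "gcd v (gm n)" "n-1"] by (simp add: gm_def)
  obtain i j where i: "gcd u (gm n) = 2 ^ i" and j: "gcd v (gm n) = 2 ^ j" using gu gv by blast
  show ?thesis
  proof (cases "i \<le> j")
    case True
    then have "gcd u (gm n) dvd v" using i j pow2_le_dvd by (metis dvd_trans gcd_dvd1)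
    moreover have "u \<noteq> 0"
    proof
      assume "u = 0"
      then have "gm n dvd v" using calculation by simp
      then have "v = 0" using assms(2) by (metis dvd_imp_le gr0I linorder_not_le)
      then show False using assms \<open>u = 0\<close> by simp
    qed
    ultimately show ?thesis using cyc_solve assms by blast
  next
    case False
    then have "gcd v (gm n) dvd u" using i j pow2_le_dvd by (metis dvd_trans gcd_dvd1 nat_le_linear)
    moreover have "v \<noteq> 0"
    proof
      assume "v = 0"
      then have "gm n dvd u" using calculation by simp
      then have "u = 0" using assms(1) by (metis dvd_imp_le gr0I linorder_not_le)
      then show False using assms \<open>v = 0\<close> by simp
    qed
    ultimately show ?thesis using cyc_solve assms by blast
  qed
qed

lemma gpow_range:
  assumes "n \<ge> 3" "a < 2 * gm n" "k \<ge> 1"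
  shows "(a < gm n \<longrightarrow> gpow n a k < gm n) \<and> (gm n \<le> a \<longrightarrow> gpow n a k = a \<or> gpow n a k = 0)"
proof -
  obtain k' where k: "k = Suc k'" using assms(3) by (metis Suc_le_D One_nat_def)
  have "gm n > 0" using gm_facts[OF assms(1)] by simp
  then show ?thesis using gpowP[of a n k'] gpowH[OF assms(1) _ assms(2), of k'] k by auto
qed

lemma adj_iff:
  assumes "n \<ge> 3" "u \<in> gcarrier n" "v \<in> gcarrier n"
  shows "power_adj n u v \<longleftrightarrow> u \<noteq> v \<and> (u = 0 \<or> v = 0 \<or> (u < gm n \<and> v < gm n))"
proof -
  note f = gm_facts[OF assms(1)]
  have u: "u < 2 * gm n" and v: "v < 2 * gm n" using assms f by (auto simp: gcarrier_def)
  show ?thesis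
  proof
    assume a: "power_adj n u v"
    then obtain k where k: "k \<ge> 1" "gpow n u k = v \<or> gpow n v k = u" and ne: "u \<noteq> v"
      unfolding power_adj_def by blast
    show "u \<noteq> v \<and> (u = 0 \<or> v = 0 \<or> (u < gm n \<and> v < gm n))"
      using gpow_range[OF assms(1) u k(1)] gpow_range[OF assms(1) v k(1)] k ne
      by (metis linorder_not_le)
  next
    assume a: "u \<noteq> v \<and> (u = 0 \<or> v = 0 \<or> (u < gm n \<and> v < gm n))"
    have ex: "\<exists>k\<ge>1. gpow n u k = v \<or> gpow n v k = u"
    proof (cases "u < gm n \<and> v < gm n")
      case True
      then obtain k where "(Suc k * u) mod gm n = v \<or> (Suc k * v) mod gm n = u"
        using cyc_adj[of u n v] a True by blast
      then show ?thesis using gpowP True by (metis le_add1 plus_1_eq_Suc)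
    next
      case False
      then have "(u = 0 \<and> gm n \<le> v) \<or> (v = 0 \<and> gm n \<le> u)" using a f by auto
      then show ?thesis
      proof
        assume "u = 0 \<and> gm n \<le> v"
        then have "gpow n v (Suc 1) = u" using gpowH[OF assms(1) _ v, of 1] by simp
        then show ?thesis by (metis le_add2 plus_1_eq_Suc)
      next
        assume "v = 0 \<and> gm n \<le> u"
        then have "gpow n u (Suc 1) = v" using gpowH[OF assms(1) _ u, of 1] by simp
        then show ?thesis by (metis le_add2 plus_1_eq_Suc)
      qed
    qed
    then show "power_adj n u v" using a assms unfolding power_adj_def by blast
  qed
qed



lemma gdist_0: "gdist V E u u = 0"
  unfolding gdist_def by (rule Least_equality) auto

lemma gdist_1: assumes "u \<noteq> v" "v \<in> V" "E u v" shows "gdist V E u v = 1"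
  unfolding gdist_def
proof (rule Least_equality)
  show "walk_le V E 1 u v" using assms by simp
next
  fix d assume "walk_le V E d u v" then show "1 \<le> d" using assms by (cases d) auto
qed

lemma gdist_2: assumes "u \<noteq> v" "v \<in> V" "\<not> E u v" "w \<in> V" "E u w" "E w v"
  shows "gdist V E u v = 2"
  unfolding gdist_def
proof (rule Least_equality)
  show "walk_le V E 2 u v" using assms by (auto simp: numeral_2_eq_2)
next
  fix d assume a: "walk_le V E d u v" show "2 \<le> d"
  proof (cases d)
    case 0 then show ?thesis using a assms by simp
  next
    case (Suc d') then show ?thesis using a assms by (cases d') auto
  qed
qed

lemma dist_formula:
  assumes "n \<ge> 3" "x \<in> gcarrier n" "y \<in> gcarrier n"
  shows "gdist (gcarrier n) (power_adj n) x y =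
    (if x = y then 0 else if x = 0 \<or> y = 0 \<or> (x < gm n \<and> y < gm n) then 1 else 2)"
proof -
  have z: "0 \<in> gcarrier n" by (simp add: gcarrier_def)
  show ?thesis
  proof (cases "x = y")
    case True then show ?thesis by (simp add: gdist_0)
  next
    case ne: False
    show ?thesis
    proof (cases "x = 0 \<or> y = 0 \<or> (x < gm n \<and> y < gm n)")
      case True
      then show ?thesis using ne gdist_1[of x y "gcarrier n" "power_adj n"] adj_iff[OF assms] assms(3) by simp
    next
      case False
      then have "gdist (gcarrier n) (power_adj n) x y = 2"
        using ne gdist_2[of x y "gcarrier n" "power_adj n" 0] adj_iff[OF assms] assms
          adj_iff[OF assms(1) assms(2) z] adj_iff[OF assms(1) z assms(3)] z by simp
      then show ?thesis using False ne by simp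
    qed
  qed
qed

definition valid :: "nat \<Rightarrow> nat set \<Rightarrow> bool" where
  "valid m C \<longleftrightarrow> C \<subseteq> {0..<2*m} \<and>
     (\<forall>x\<in>C. \<forall>y\<in>C. 0 < x \<and> x < m \<and> 0 < y \<and> y < m \<longrightarrow> x = y) \<and>
     (\<forall>x\<in>C. \<forall>y\<in>C. m \<le> x \<and> m \<le> y \<longrightarrow> x = y)"

lemma resolving_iff:
  assumes "n \<ge> 3"
  shows "resolving (gcarrier n) (power_adj n) U \<longleftrightarrow>
         U \<subseteq> gcarrier n \<and> valid (gm n) (gcarrier n - U)"
proof -
  note f = gm_facts[OF assms]
  define m where "m = gm n"
  have V: "gcarrier n = {0..<2*m}" using f by (simp add: gcarrier_def m_def)
  have d: "\<And>x y. x < 2*m \<Longrightarrow> y < 2*m \<Longrightarrow> gdist (gcarrier n) (power_adj n) x y =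
    (if x = y then 0 else if x = 0 \<or> y = 0 \<or> (x < m \<and> y < m) then 1 else 2)"
    using dist_formula[OF assms] V m_def by simp
  have m4: "m \<ge> 4" using f m_def by simp
  show ?thesis
  proof
    assume r: "resolving (gcarrier n) (power_adj n) U"
    then have sub: "U \<subseteq> {0..<2*m}" using V unfolding resolving_def by simp
    have rr: "\<And>u v. u < 2*m \<Longrightarrow> v < 2*m \<Longrightarrow> u \<noteq> v \<Longrightarrow> \<exists>w\<in>U. gdist (gcarrier n) (power_adj n) u w \<noteq> gdist (gcarrier n) (power_adj n) v w"
      using r V unfolding resolving_def by simp
    have "valid m ({0..<2*m} - U)"
      unfolding valid_def
    proof (intro conjI ballI impI)
      fix x y assume xy: "x \<in> {0..<2*m} - U" "y \<in> {0..<2*m} - U" "0 < x \<and> x < m \<and> 0 < y \<and> y < m"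
      show "x = y"
      proof (rule ccontr)
        assume "x \<noteq> y"
        then obtain w where w: "w \<in> U" "gdist (gcarrier n) (power_adj n) x w \<noteq> gdist (gcarrier n) (power_adj n) y w"
          using rr[of x y] xy(1,2) by auto
        have "w < 2*m" using w sub by auto
        then show False using w d[of x w] d[of y w] xy by (simp split: if_splits)
      qed
    next
      fix x y assume xy: "x \<in> {0..<2*m} - U" "y \<in> {0..<2*m} - U" "m \<le> x \<and> m \<le> y"
      show "x = y"
      proof (rule ccontr)
        assume "x \<noteq> y"
        then obtain w where w: "w \<in> U" "gdist (gcarrier n) (power_adj n) x w \<noteq> gdist (gcarrier n) (power_adj n) y w"
          using rr[of x y] xy(1,2) by auto
        have "w < 2*m" using w sub by auto
        then show False using w d[of x w] d[of y w] xy by (simp split: if_splits)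
      qed
    qed auto
    then show "U \<subseteq> gcarrier n \<and> valid (gm n) (gcarrier n - U)" using sub V m_def by simp
  next
    assume a: "U \<subseteq> gcarrier n \<and> valid (gm n) (gcarrier n - U)"
    then have sub: "U \<subseteq> {0..<2*m}" and va: "valid m ({0..<2*m} - U)" using V m_def by simp_all
    have vaQ: "\<forall>x\<in>{0..<2*m} - U. \<forall>y\<in>{0..<2*m} - U. 0 < x \<and> x < m \<and> 0 < y \<and> y < m \<longrightarrow> x = y"
        using va unfolding valid_def by blast
    have vaH: "\<forall>x\<in>{0..<2*m} - U. \<forall>y\<in>{0..<2*m} - U. m \<le> x \<and> m \<le> y \<longrightarrow> x = y"
        using va unfolding valid_def by blast
    have q0: "\<exists>q\<in>U. 0 < q \<and> q < m"
    proof (rule ccontr)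
      assume "\<not> ?thesis"
      then have "1 \<notin> U" "2 \<notin> U" using m4 by auto
      then have "1 \<in> {0..<2*m} - U" "2 \<in> {0..<2*m} - U" using m4 by auto
      then have "(1::nat) = 2" using m4 vaQ[rule_format, of 1 2] by simp
      then show False by simp
    qed
    obtain q where q: "q \<in> U" "0 < q" "q < m" using q0 by blast
    have h0: "\<exists>h\<in>U. m \<le> h"
    proof (rule ccontr)
      assume "\<not> ?thesis"
      then have "m \<notin> U" "m+1 \<notin> U" by auto
      then have "m \<in> {0..<2*m} - U" "m+1 \<in> {0..<2*m} - U" using m4 by auto
      then have "m = m + 1" using vaH[rule_format, of m "m+1"] by simp
      then show False by simp
    qed
    then obtain h where h: "h \<in> U" "m \<le> h" by blast
    have "h < 2*m" using h sub by auto
    have "\<forall>u\<in>{0..<2*m}. \<forall>v\<in>{0..<2*m}. u \<noteq> v \<longrightarrow> (\<exists>w\<in>U. gdist (gcarrier n) (power_adj n) u w \<noteq> gdist (gcarrier n) (power_adj n) v w)"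
    proof (intro ballI impI)
      fix u v assume uv: "u \<in> {0..<2*m}" "v \<in> {0..<2*m}" "u \<noteq> v"
      show "\<exists>w\<in>U. gdist (gcarrier n) (power_adj n) u w \<noteq> gdist (gcarrier n) (power_adj n) v w"
      proof (cases "u \<in> U")
        case True
        have "gdist (gcarrier n) (power_adj n) u u \<noteq> gdist (gcarrier n) (power_adj n) v u"
          using d[of u u] d[of v u] uv by simp
        then show ?thesis using True by blast
      next
        case nu: False
        show ?thesis
        proof (cases "v \<in> U")
          case True
          have "gdist (gcarrier n) (power_adj n) u v \<noteq> gdist (gcarrier n) (power_adj n) v v"
            using d[of u v] d[of v v] uv by simp
          then show ?thesis using True by blast
        next
          case nv: False
          show ?thesis
          proof (cases "m \<le> u \<or> m \<le> v")
            case True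
            have "\<not> (m \<le> u \<and> m \<le> v)" using vaH[rule_format, of u v] nu nv uv by auto
            then have "u < m \<or> v < m" by linarith
            have qq: "q < 2*m" using q by simp
            have "u \<noteq> q" "v \<noteq> q" using nu nv q by auto
            then have "gdist (gcarrier n) (power_adj n) u q \<noteq> gdist (gcarrier n) (power_adj n) v q"
              using d[of u q] d[of v q] uv qq q \<open>u < m \<or> v < m\<close> True by auto
            then show ?thesis using q by blast
          next
            case False
            have "\<not> (0 < u \<and> u < m \<and> 0 < v \<and> v < m)" using vaQ[rule_format, of u v] nu nv uv by auto
            then have "u = 0 \<or> v = 0" using False by linarith
            have "u \<noteq> h" "v \<noteq> h" using nu nv h by auto
            then have "gdist (gcarrier n) (power_adj n) u h \<noteq> gdist (gcarrier n) (power_adj n) v h"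
              using d[of u h] d[of v h] uv \<open>h < 2*m\<close> h \<open>u = 0 \<or> v = 0\<close> False by auto
            then show ?thesis using h by blast
          qed
        qed
      qed
    qed
    then show "resolving (gcarrier n) (power_adj n) U" unfolding resolving_def using a V by simp
  qed
qed


lemma valid_finite: "valid m C \<Longrightarrow> finite C"
  by (rule finite_subset[of _ "{0..<2*m}"]) (auto simp: valid_def)

lemma valid_card_le3:
  assumes "valid m C" shows "card C \<le> 3"
proof -
  have fin: "finite C" using assms by (rule valid_finite)
  have s: "C \<subseteq> {0} \<union> {x\<in>C. 0 < x \<and> x < m} \<union> {x\<in>C. m \<le> x}" by auto
  have c1: "card {x\<in>C. 0 < x \<and> x < m} \<le> Suc 0"
  proof -
    have f: "finite {x\<in>C. 0 < x \<and> x < m}" using fin by simp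
    have "\<forall>a1\<in>{x\<in>C. 0 < x \<and> x < m}. \<forall>a2\<in>{x\<in>C. 0 < x \<and> x < m}. a1 = a2"
      using assms by (auto simp: valid_def)
    then show ?thesis using card_le_Suc0_iff_eq[OF f] by blast
  qed
  have c2: "card {x\<in>C. m \<le> x} \<le> Suc 0"
  proof -
    have f: "finite {x\<in>C. m \<le> x}" using fin by simp
    have "\<forall>a1\<in>{x\<in>C. m \<le> x}. \<forall>a2\<in>{x\<in>C. m \<le> x}. a1 = a2"
      using assms by (auto simp: valid_def)
    then show ?thesis using card_le_Suc0_iff_eq[OF f] by blast
  qed
  have "card C \<le> card ({0} \<union> {x\<in>C. 0 < x \<and> x < m} \<union> {x\<in>C. m \<le> x})"
    using s fin by (intro card_mono) auto
  also have "\<dots> \<le> card ({0::nat} \<union> {x\<in>C. 0 < x \<and> x < m}) + card {x\<in>C. m \<le> x}" by (rule card_Un_le)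
  also have "\<dots> \<le> card {0::nat} + card {x\<in>C. 0 < x \<and> x < m} + card {x\<in>C. m \<le> x}"
    using card_Un_le[of "{0::nat}" "{x\<in>C. 0 < x \<and> x < m}"] by linarith
  finally show ?thesis using c1 c2 by simp
qed


lemma valid_empty: "valid m {}" by (simp add: valid_def)

lemma S0: "{C. valid m C \<and> card C = 0} = {{}}"
proof (rule set_eqI)
  fix C :: "nat set"
  show "C \<in> {C. valid m C \<and> card C = 0} \<longleftrightarrow> C \<in> {{}}"
  proof
    assume "C \<in> {C. valid m C \<and> card C = 0}"
    then have "valid m C" "card C = 0" by auto
    then show "C \<in> {{}}" using valid_finite[of m C] by simp
  next
    assume "C \<in> {{}}" then show "C \<in> {C. valid m C \<and> card C = 0}" using valid_empty by simp
  qed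
qed


lemma S1: "{C. valid m C \<and> card C = 1} = (\<lambda>x. {x}) ` {0..<2*m}"
proof (rule set_eqI)
  fix C :: "nat set"
  show "C \<in> {C. valid m C \<and> card C = 1} \<longleftrightarrow> C \<in> (\<lambda>x. {x}) ` {0..<2*m}"
  proof
    assume "C \<in> {C. valid m C \<and> card C = 1}"
    then have v: "valid m C" and "card C = Suc 0" by auto
    have "\<exists>x. C = {x}" using \<open>card C = Suc 0\<close> by (rule iffD1[OF card_1_singleton_iff])
    then obtain x where x: "C = {x}" by (elim exE)
    then have "x < 2*m" using v unfolding valid_def by simp
    then show "C \<in> (\<lambda>x. {x}) ` {0..<2*m}" using x by simp
  next
    assume "C \<in> (\<lambda>x. {x}) ` {0..<2*m}"
    then obtain x where "C = {x}" "x < 2*m" by (auto simp del: insert_is_Un)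
    then show "C \<in> {C. valid m C \<and> card C = 1}" by (simp add: valid_def)
  qed
qed



lemma valid_pair:
  assumes "valid m {x,y}"
  shows "x < 2*m" "y < 2*m" "\<not>(0 < x \<and> x < m \<and> 0 < y \<and> y < m \<and> x \<noteq> y)" "\<not>(m \<le> x \<and> m \<le> y \<and> x \<noteq> y)"
  using assms unfolding valid_def by auto

lemma S2:
  shows "{C. valid m C \<and> card C = 2} =
     (\<lambda>x. {0,x}) ` {1..<2*m} \<union> (\<lambda>(q,h). {q,h}) ` ({1..<m} \<times> {m..<2*m})"
proof (rule set_eqI, rule iffI)
  fix C assume "C \<in> {C. valid m C \<and> card C = 2}"
  then have va: "valid m C" and c: "card C = 2" by auto
  have "\<exists>x y. C = {x,y} \<and> x \<noteq> y" using c by (rule iffD1[OF card_2_iff])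
  then obtain x y where xy: "C = {x,y}" "x \<noteq> y" by (elim exE conjE)
  have r: "x < 2*m" "y < 2*m" "\<not>(0 < x \<and> x < m \<and> 0 < y \<and> y < m \<and> x \<noteq> y)" "\<not>(m \<le> x \<and> m \<le> y \<and> x \<noteq> y)"
    using valid_pair[of m x y] va xy(1) by simp_all
  show "C \<in> (\<lambda>x. {0,x}) ` {1..<2*m} \<union> (\<lambda>(q,h). {q,h}) ` ({1..<m} \<times> {m..<2*m})"
  proof (cases "x = 0")
    case True
    have "C = (\<lambda>x. {0,x}) y" "y \<in> {1..<2*m}" using True xy r by auto
    then show ?thesis by blast
  next
    case x0: False
    show ?thesis
    proof (cases "y = 0")
      case True
      have "C = (\<lambda>x. {0,x}) x" "x \<in> {1..<2*m}" using True xy r x0 by auto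
      then show ?thesis by blast
    next
      case y0: False
      show ?thesis
      proof (cases "x < m")
        case True
        have "C = (\<lambda>(q,h). {q,h}) (x,y)" "(x,y) \<in> {1..<m} \<times> {m..<2*m}" using True xy r x0 y0 by auto
        then show ?thesis by blast
      next
        case False
        have "C = (\<lambda>(q,h). {q,h}) (y,x)" "(y,x) \<in> {1..<m} \<times> {m..<2*m}" using False xy r x0 y0 by auto
        then show ?thesis by blast
      qed
    qed
  qed
next
  fix C assume "C \<in> (\<lambda>x. {0,x}) ` {1..<2*m} \<union> (\<lambda>(q,h). {q,h}) ` ({1..<m} \<times> {m..<2*m})"
  then show "C \<in> {C. valid m C \<and> card C = 2}"
  proof
    assume "C \<in> (\<lambda>x. {0,x}) ` {1..<2*m}"
    then obtain x where "C = {0,x}" "x \<in> {1..<2*m}" by auto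
    then show ?thesis by (auto simp: valid_def)
  next
    assume "C \<in> (\<lambda>(q,h). {q,h}) ` ({1..<m} \<times> {m..<2*m})"
    then obtain q h where "C = {q,h}" "q \<in> {1..<m}" "h \<in> {m..<2*m}" by auto
    then show ?thesis by (auto simp: valid_def)
  qed
qed



lemma vB: "valid m C \<Longrightarrow> x \<in> C \<Longrightarrow> x < 2*m"
  unfolding valid_def by (meson atLeastLessThan_iff subsetD)
lemma vQ: "valid m C \<Longrightarrow> x \<in> C \<Longrightarrow> y \<in> C \<Longrightarrow> 0 < x \<Longrightarrow> x < m \<Longrightarrow> 0 < y \<Longrightarrow> y < m \<Longrightarrow> x = y"
  unfolding valid_def by blast
lemma vH: "valid m C \<Longrightarrow> x \<in> C \<Longrightarrow> y \<in> C \<Longrightarrow> m \<le> x \<Longrightarrow> m \<le> y \<Longrightarrow> x = y"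
  unfolding valid_def by blast

lemma S3_aux:
  assumes "valid m {0,a,b}" "a \<noteq> 0" "b \<noteq> 0" "a \<noteq> b"
  shows "{0,a,b} \<in> (\<lambda>(q,h). {0,q,h}) ` ({1..<m} \<times> {m..<2*m})"
proof -
  have ab: "a \<in> {0,a,b}" "b \<in> {0,a,b}" by simp_all
  have r: "a < 2*m" "b < 2*m" using vB[OF assms(1) ab(1)] vB[OF assms(1) ab(2)] by simp_all
  have r2: "\<not>(0 < a \<and> a < m \<and> 0 < b \<and> b < m)" using vQ[OF assms(1) ab] assms(4) by blast
  have r3: "\<not>(m \<le> a \<and> m \<le> b)" using vH[OF assms(1) ab] assms(4) by blast
  show ?thesis
  proof (cases "a < m")
    case True
    have "{0,a,b} = (\<lambda>(q,h). {0::nat,q,h}) (a,b)" "(a,b) \<in> {1..<m} \<times> {m..<2*m}" using True assms r r2 r3 by auto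
    then show ?thesis by blast
  next
    case False
    have "{0,a,b} = (\<lambda>(q,h). {0::nat,q,h}) (b,a)" "(b,a) \<in> {1..<m} \<times> {m..<2*m}" using False assms r r2 r3 by auto
    then show ?thesis by blast
  qed
qed

lemma S3:
  shows "{C. valid m C \<and> card C = 3} = (\<lambda>(q,h). {0,q,h}) ` ({1..<m} \<times> {m..<2*m})"
proof (rule set_eqI, rule iffI)
  fix C assume "C \<in> {C. valid m C \<and> card C = 3}"
  then have va: "valid m C" and c: "card C = 3" by auto
  have "\<exists>x y z. C = {x,y,z} \<and> x \<noteq> y \<and> y \<noteq> z \<and> x \<noteq> z" using c by (rule iffD1[OF card_3_iff])
  then obtain x y z where xyz: "C = {x,y,z}" "x \<noteq> y" "y \<noteq> z" "x \<noteq> z" by (elim exE conjE)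
  have mem: "x \<in> C" "y \<in> C" "z \<in> C" using xyz(1) by simp_all
  have "x = 0 \<or> y = 0 \<or> z = 0"
  proof (rule ccontr)
    assume "\<not> (x = 0 \<or> y = 0 \<or> z = 0)"
    then have nz: "0 < x" "0 < y" "0 < z" by auto
    consider "x<m" "y<m" | "x<m" "z<m" | "y<m" "z<m" | "m\<le>x" "m\<le>y" | "m\<le>x" "m\<le>z" | "m\<le>y" "m\<le>z"
      by linarith
    then show False
    proof cases
      case 1 then show False using vQ[OF va mem(1) mem(2)] nz xyz by simp
    next
      case 2 then show False using vQ[OF va mem(1) mem(3)] nz xyz by simp
    next
      case 3 then show False using vQ[OF va mem(2) mem(3)] nz xyz by simp
    next
      case 4 then show False using vH[OF va mem(1) mem(2)] nz xyz by simp
    next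
      case 5 then show False using vH[OF va mem(1) mem(3)] nz xyz by simp
    next
      case 6 then show False using vH[OF va mem(2) mem(3)] nz xyz by simp
    qed
  qed
  then show "C \<in> (\<lambda>(q,h). {0,q,h}) ` ({1..<m} \<times> {m..<2*m})"
  proof (elim disjE)
    assume "x = 0" then show ?thesis using S3_aux[of m y z] va xyz by simp
  next
    assume y: "y = 0"
    have "C = {0,x,z}" using xyz y by auto
    then show ?thesis using S3_aux[of m x z] va xyz y by simp
  next
    assume z: "z = 0"
    have "C = {0,x,y}" using xyz z by auto
    then show ?thesis using S3_aux[of m x y] va xyz z by simp
  qed
next
  fix C assume "C \<in> (\<lambda>(q,h). {0,q,h}) ` ({1..<m} \<times> {m..<2*m})"
  then obtain q h where "C = {0,q,h}" "q \<in> {1..<m}" "h \<in> {m..<2*m}" by auto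
  then show "C \<in> {C. valid m C \<and> card C = 3}" by (auto simp: valid_def)
qed


lemma cS0: "card {C. valid m C \<and> card C = 0} = 1" by (simp add: S0)

lemma cS1: "card {C. valid m C \<and> card C = 1} = 2 * m"
  unfolding S1 by (simp add: card_image inj_on_def)

lemma cS2: "card {C. valid m C \<and> card C = 2} = (2*m - 1) + (m - 1) * m"
proof -
  have i1: "inj_on (\<lambda>x. {0::nat,x}) {1..<2*m}" by (auto simp: inj_on_def doubleton_eq_iff)
  have i2: "inj_on (\<lambda>(q,h). {q::nat,h}) ({1..<m} \<times> {m..<2*m})" by (auto simp: inj_on_def doubleton_eq_iff)
  have dj: "(\<lambda>x. {0::nat,x}) ` {1..<2*m} \<inter> (\<lambda>(q,h). {q,h}) ` ({1..<m} \<times> {m..<2*m}) = {}"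
    by (auto simp: doubleton_eq_iff)
  have "card ((\<lambda>x. {0::nat,x}) ` {1..<2*m} \<union> (\<lambda>(q,h). {q,h}) ` ({1..<m} \<times> {m..<2*m}))
     = card ((\<lambda>x. {0::nat,x}) ` {1..<2*m}) + card ((\<lambda>(q,h). {q::nat,h}) ` ({1..<m} \<times> {m..<2*m}))"
    using dj by (intro card_Un_disjoint) auto
  also have "\<dots> = (2*m - 1) + (m - 1) * m"
    using i1 i2 by (simp add: card_image card_cartesian_product)
  finally show ?thesis unfolding S2 .
qed

lemma cS3: "card {C. valid m C \<and> card C = 3} = (m - 1) * m"
proof -
  have i2: "inj_on (\<lambda>(q,h). {0::nat,q,h}) ({1..<m} \<times> {m..<2*m})"
  proof (rule inj_onI)
    fix p p' assume a: "p \<in> {1..<m} \<times> {m..<2 * m}" "p' \<in> {1..<m} \<times> {m..<2 * m}"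
      "(\<lambda>(q,h). {0::nat,q,h}) p = (\<lambda>(q,h). {0::nat,q,h}) p'"
    obtain q h where p: "p = (q,h)" by (cases p)
    obtain q' h' where p': "p' = (q',h')" by (cases p')
    have e: "{0, q, h} = {0, q', h'}" using a(3) p p' by simp
    have "q \<in> {0, q', h'}" "h \<in> {0, q', h'}" by (simp_all add: e[symmetric])
    then show "p = p'" using a(1,2) p p' by auto
  qed
  show ?thesis unfolding S3 using i2 by (simp add: card_image card_cartesian_product)
qed



lemma carrier_eq: "n \<ge> 3 \<Longrightarrow> gcarrier n = {0..<2 * gm n}"
  using gm_facts(2) by (simp add: gcarrier_def)

lemma nr:
  assumes n: "n \<ge> 3" and k: "k \<le> 2 * gm n"
  shows "num_resolving (gcarrier n) (power_adj n) k = card {C. valid (gm n) C \<and> card C = 2 * gm n - k}"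
proof -
  define m where "m = gm n"
  define V where "V = gcarrier n"
  have V: "V = {0..<2*m}" using carrier_eq[OF n] by (simp add: V_def m_def)
  have fV: "finite V" and cV: "card V = 2*m" using V by simp_all
  have eq: "{U. resolving V (power_adj n) U \<and> card U = k} = (\<lambda>C. V - C) ` {C. valid m C \<and> card C = 2*m - k}"
  proof (rule set_eqI, rule iffI)
    fix U assume "U \<in> {U. resolving V (power_adj n) U \<and> card U = k}"
    then have r: "resolving V (power_adj n) U" and cU: "card U = k" by auto
    have sub: "U \<subseteq> V" and va: "valid m (V - U)" using r resolving_iff[OF n, of U] by (simp_all add: V_def m_def)
    have "card (V - U) = 2*m - k" using sub fV cV cU by (simp add: card_Diff_subset finite_subset)
    moreover have "U = V - (V - U)" using sub by auto
    ultimately show "U \<in> (\<lambda>C. V - C) ` {C. valid m C \<and> card C = 2*m - k}" using va by (intro image_eqI[of U _ "V - U"]) simp_all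
  next
    fix U assume "U \<in> (\<lambda>C. V - C) ` {C. valid m C \<and> card C = 2*m - k}"
    then obtain C where U: "U = V - C" and va: "valid m C" and cC: "card C = 2*m - k" by auto
    have sub: "C \<subseteq> V" using va V unfolding valid_def by simp
    have "V - U = C" using sub U by auto
    then have r: "resolving V (power_adj n) U" using resolving_iff[OF n, of U] va U by (simp add: V_def m_def)
    have "card U = k" using U sub fV cV cC k by (simp add: card_Diff_subset finite_subset m_def)
    then show "U \<in> {U. resolving V (power_adj n) U \<and> card U = k}" using r by simp
  qed
  have inj: "inj_on (\<lambda>C. V - C) {C. valid m C \<and> card C = 2*m - k}"
  proof (rule inj_onI)
    fix C D assume "C \<in> {C. valid m C \<and> card C = 2*m - k}" "D \<in> {C. valid m C \<and> card C = 2*m - k}" "V - C = V - D"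
    then have "C \<subseteq> V" "D \<subseteq> V" "V - C = V - D" using V unfolding valid_def by auto
    then show "C = D" by (metis Diff_Diff_Int inf.absorb2)
  qed
  have "card {U. resolving V (power_adj n) U \<and> card U = k} = card {C. valid m C \<and> card C = 2*m - k}"
    unfolding eq by (rule card_image[OF inj])
  then show ?thesis unfolding num_resolving_def V_def m_def .
qed


lemma res_card_ge:
  assumes n: "n \<ge> 3" and r: "resolving (gcarrier n) (power_adj n) U"
  shows "card U \<ge> 2 * gm n - 3"
proof -
  have sub: "U \<subseteq> gcarrier n" and va: "valid (gm n) (gcarrier n - U)" using resolving_iff[OF n] r by auto
  have c3: "card (gcarrier n - U) \<le> 3" using valid_card_le3[OF va] .
  have f: "finite (gcarrier n)" by (simp add: gcarrier_def)
  have "card (gcarrier n - U) = card (gcarrier n) - card U" using sub f by (simp add: card_Diff_subset finite_subset)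
  moreover have "card (gcarrier n) = 2 * gm n" using carrier_eq[OF n] by simp
  moreover have "card U \<le> card (gcarrier n)" using sub f by (simp add: card_mono)
  ultimately show ?thesis using c3 by linarith
qed

lemma mdim:
  assumes n: "n \<ge> 3"
  shows "metric_dim (gcarrier n) (power_adj n) = 2 * gm n - 3"
  unfolding metric_dim_def
proof (rule Least_equality)
  have m4: "gm n \<ge> 4" using gm_facts[OF n] by simp
  have "num_resolving (gcarrier n) (power_adj n) (2 * gm n - 3) = (gm n - 1) * gm n"
    using nr[OF n, of "2 * gm n - 3"] cS3[of "gm n"] m4 by simp
  then have "card {U. resolving (gcarrier n) (power_adj n) U \<and> card U = 2 * gm n - 3} \<noteq> 0"
    unfolding num_resolving_def using m4 by simp
  then have "{U. resolving (gcarrier n) (power_adj n) U \<and> card U = 2 * gm n - 3} \<noteq> {}"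
    by (metis card.empty)
  then show "\<exists>U. resolving (gcarrier n) (power_adj n) U \<and> card U = 2 * gm n - 3" by blast
next
  fix y assume "\<exists>U. resolving (gcarrier n) (power_adj n) U \<and> card U = y"
  then obtain U where "resolving (gcarrier n) (power_adj n) U" "card U = y" by (elim exE conjE)
  then show "2 * gm n - 3 \<le> y" using res_card_ge[OF n] by blast
qed



lemma sum4: "a \<notin> {b,c,d} \<Longrightarrow> b \<notin> {c,d} \<Longrightarrow> c \<notin> {d} \<Longrightarrow>
  sum f {a,b,c,d} = f a + (f b + (f c + (f d :: 'b::comm_monoid_add)))"
  by simp

theorem mainTheorem7:
  fixes n :: nat
  assumes "n \<ge> 3"
  shows "resolving_poly (gcarrier n) (power_adj n) =
      monom 1 (2 ^ n)
    + monom (2 ^ n) (2 ^ n - 1)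
    + monom (2 ^ (2 * n - 2) + 2 ^ (n - 1) - 1) (2 ^ n - 2)
    + monom (2 ^ (2 * n - 2) - 2 ^ (n - 1)) (2 ^ n - 3)"
proof -
  define M where "M = gm n"
  have m4: "M \<ge> 4" using gm_facts[OF assms] M_def by simp
  have N: "(2::nat) ^ n = 2 * M" using gm_facts[OF assms] M_def by simp
  have Ni: "(2::int) ^ n = 2 * int M" using N by (metis of_nat_mult of_nat_numeral of_nat_power)
  have Mi: "(2::int) ^ (n - 1) = int M" unfolding M_def gm_def by simp
  have MMi: "(2::int) ^ (2 * n - 2) = int M * int M"
  proof -
    have "2 * n - 2 = (n - 1) + (n - 1)" using assms by simp
    then have "(2::int) ^ (2 * n - 2) = 2 ^ (n - 1) * 2 ^ (n - 1)" by (simp only: power_add)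
    then show ?thesis by (simp only: Mi)
  qed
  have cV: "card (gcarrier n) = 2 * M" using carrier_eq[OF assms] M_def by simp
  have md: "metric_dim (gcarrier n) (power_adj n) = 2 * M - 3" using mdim[OF assms] M_def by simp
  have r: "\<And>j. j \<le> 3 \<Longrightarrow> num_resolving (gcarrier n) (power_adj n) (2*M - j) = card {C. valid M C \<and> card C = j}"
  proof -
    fix j :: nat assume "j \<le> 3"
    then have "2*M - (2*M - j) = j" using m4 by simp
    then show "num_resolving (gcarrier n) (power_adj n) (2*M - j) = card {C. valid M C \<and> card C = j}"
      using nr[OF assms, of "2*M - j"] M_def by simp
  qed
  have r0: "num_resolving (gcarrier n) (power_adj n) (2*M) = 1" using r[of 0] cS0 by simp
  have r1: "num_resolving (gcarrier n) (power_adj n) (2*M - 1) = 2*M" using r[of 1] cS1 by simp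
  have r2: "num_resolving (gcarrier n) (power_adj n) (2*M - 2) = (2*M - 1) + (M - 1) * M" using r[of 2] cS2 by simp
  have r3: "num_resolving (gcarrier n) (power_adj n) (2*M - 3) = (M - 1) * M" using r[of 3] cS3 by simp
  have I: "{2*M - 3..2*M} = {2*M - 3, 2*M - 2, 2*M - 1, 2*M}" using m4 by auto
  have c2: "int ((2*M - 1) + (M - 1) * M) = int M * int M + int M - 1"
  proof -
    obtain K where K: "M = Suc K" using m4 by (cases M) auto
    show ?thesis unfolding K by (simp add: algebra_simps)
  qed
  have c3: "int ((M - 1) * M) = int M * int M - int M"
  proof -
    obtain K where K: "M = Suc K" using m4 by (cases M) auto
    show ?thesis unfolding K by (simp add: algebra_simps)
  qed
  have "resolving_poly (gcarrier n) (power_adj n) =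
     (\<Sum>k\<in>{2*M - 3, 2*M - 2, 2*M - 1, 2*M}. monom (int (num_resolving (gcarrier n) (power_adj n) k)) k)"
    unfolding resolving_poly_def md cV I ..
  also have "\<dots> = monom (int (num_resolving (gcarrier n) (power_adj n) (2*M - 3))) (2*M - 3)
     + (monom (int (num_resolving (gcarrier n) (power_adj n) (2*M - 2))) (2*M - 2)
     + (monom (int (num_resolving (gcarrier n) (power_adj n) (2*M - 1))) (2*M - 1)
     + monom (int (num_resolving (gcarrier n) (power_adj n) (2*M))) (2*M)))"
  proof -
    have a: "2*M - 3 \<notin> {2*M - 2, 2*M - 1, 2*M}" "2*M - 2 \<notin> {2*M - 1, 2*M}" "2*M - 1 \<notin> {2*M}"
      using m4 by auto
    show ?thesis using sum4[OF a(1) a(2)] a(3) by simp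
  qed
  also have "\<dots> = monom (int M * int M - int M) (2*M - 3)
     + (monom (int M * int M + int M - 1) (2*M - 2)
     + (monom (2 * int M) (2*M - 1) + monom 1 (2*M)))"
    unfolding r0 r1 r2 r3 c2 c3 by simp
  also have "\<dots> = monom 1 (2 ^ n)
    + monom (2 ^ n) (2 ^ n - 1)
    + monom (2 ^ (2 * n - 2) + 2 ^ (n - 1) - 1) (2 ^ n - 2)
    + monom (2 ^ (2 * n - 2) - 2 ^ (n - 1)) (2 ^ n - 3)"
    unfolding N Ni Mi MMi by (simp add: algebra_simps)
  finally show ?thesis .
qed


end
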